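(* Let $\pi$ be a projective plane of order $q$ and let $n$ be an integer with $2\le q-n\le q$. Let $\phi$ be an embedding of the complete bipartite graph $G=K_{q-n,q}$ into $\pi$, with vertex classes $U,V$, $|U|=q-n$, $|V|=q$. If $q>n^2$, then the points $\phi(U\cup V)$ lie on the union of two lines of $\pi$.
   Context: A finite projective plane of order $q$ has $q^2+q+1$ points and lines, $q+1$ points on each line and $q+1$ lines through each point; any two distinct points lie on a unique line and any two lines meet in a unique point. An embedding of a simple graph $G=(V,E)$ into $\pi$ is an injective map $\phi$ from $V$ to the points of $\pi$ such that the induced map sending an edge $ab$ to the line through $\phi(a),\phi(b)$ is injective on $E$. *)

theory Defs
  imports Main
begin

definition projective_plane ::
  "'p set \<Rightarrow> 'l set \<Rightarrow> ('p \<Rightarrow> 'l \<Rightarrow> bool) \<Rightarrow> nat \<Rightarrow> bool" where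
  "projective_plane Pts Lns I q \<longleftrightarrow>
     finite Pts \<and> finite Lns \<and>
     card Pts = q^2 + q + 1 \<and> card Lns = q^2 + q + 1 \<and>
     (\<forall>l\<in>Lns. card {p\<in>Pts. I p l} = q + 1) \<and>
     (\<forall>p\<in>Pts. card {l\<in>Lns. I p l} = q + 1) \<and>
     (\<forall>p\<in>Pts. \<forall>p'\<in>Pts. p \<noteq> p' \<longrightarrow> (\<exists>!l. l \<in> Lns \<and> I p l \<and> I p' l)) \<and>
     (\<forall>l\<in>Lns. \<forall>l'\<in>Lns. l \<noteq> l' \<longrightarrow> (\<exists>!p. p \<in> Pts \<and> I p l \<and> I p l'))"

definition simple_graph :: "'v set \<Rightarrow> 'v set set \<Rightarrow> bool" where
  "simple_graph V E \<longleftrightarrow> (\<forall>e\<in>E. e \<subseteq> V \<and> card e = 2)"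

text \<open>Embedding of a simple graph (V,E) into the plane: injective map on
  vertices into points, such that the induced map sending edge {a,b}
  to the line through phi a, phi b is injective on E.\<close>
definition graph_embedding ::
  "'p set \<Rightarrow> 'l set \<Rightarrow> ('p \<Rightarrow> 'l \<Rightarrow> bool) \<Rightarrow> 'v set \<Rightarrow> 'v set set \<Rightarrow> ('v \<Rightarrow> 'p) \<Rightarrow> bool" where
  "graph_embedding Pts Lns I V E phi \<longleftrightarrow>
     phi ` V \<subseteq> Pts \<and> inj_on phi V \<and>
     inj_on (\<lambda>e. THE l. l \<in> Lns \<and> (\<forall>x\<in>e. I (phi x) l)) E"

definition complete_bipartite_edges :: "'v set \<Rightarrow> 'v set \<Rightarrow> 'v set set" where
  "complete_bipartite_edges U W = {{u, w} | u w. u \<in> U \<and> w \<in> W}"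

end

theory Submission imports Defs begin

locale pplane =
  fixes Pts :: "'p set" and Lns :: "'l set" and I :: "'p \<Rightarrow> 'l \<Rightarrow> bool" and q :: nat
  assumes pp: "projective_plane Pts Lns I q"
begin

lemma finP: "finite Pts" and finL: "finite Lns"
  using pp by (auto simp: projective_plane_def)

lemma line_card: "l \<in> Lns \<Longrightarrow> card {p\<in>Pts. I p l} = q + 1"
  using pp by (auto simp: projective_plane_def)

lemma pt_card: "p \<in> Pts \<Longrightarrow> card {l\<in>Lns. I p l} = q + 1"
  using pp by (auto simp: projective_plane_def)

lemma line_ex: "p \<in> Pts \<Longrightarrow> p' \<in> Pts \<Longrightarrow> p \<noteq> p' \<Longrightarrow> \<exists>l. l \<in> Lns \<and> I p l \<and> I p' l"
  using pp unfolding projective_plane_def by metis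

lemma line_uniq: "p \<in> Pts \<Longrightarrow> p' \<in> Pts \<Longrightarrow> p \<noteq> p' \<Longrightarrow> l \<in> Lns \<Longrightarrow> l' \<in> Lns \<Longrightarrow>
   I p l \<Longrightarrow> I p' l \<Longrightarrow> I p l' \<Longrightarrow> I p' l' \<Longrightarrow> l = l'"
  using pp unfolding projective_plane_def by metis

lemma meet_ex: "l \<in> Lns \<Longrightarrow> l' \<in> Lns \<Longrightarrow> l \<noteq> l' \<Longrightarrow> \<exists>p. p \<in> Pts \<and> I p l \<and> I p l'"
  using pp unfolding projective_plane_def by metis

definition ln where "ln p p' = (SOME l. l \<in> Lns \<and> I p l \<and> I p' l)"
definition mt where "mt l l' = (SOME p. p \<in> Pts \<and> I p l \<and> I p l')"

lemma ln: assumes "p \<in> Pts" "p' \<in> Pts" "p \<noteq> p'"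
  shows "ln p p' \<in> Lns" "I p (ln p p')" "I p' (ln p p')"
  using someI_ex[OF line_ex[OF assms]] unfolding ln_def by auto

lemma ln_eq: assumes "p \<in> Pts" "p' \<in> Pts" "p \<noteq> p'" "l \<in> Lns" "I p l" "I p' l"
  shows "ln p p' = l"
  using line_uniq ln assms by metis

lemma mt: assumes "l \<in> Lns" "l' \<in> Lns" "l \<noteq> l'"
  shows "mt l l' \<in> Pts" "I (mt l l') l" "I (mt l l') l'"
  using someI_ex[OF meet_ex[OF assms]] unfolding mt_def by auto

end

theorem theorem3p9:
  fixes Pts :: "'p set" and Lns :: "'l set" and I :: "'p \<Rightarrow> 'l \<Rightarrow> bool"
    and q n :: nat and U W :: "'v set" and phi :: "'v \<Rightarrow> 'p"
  assumes plane: "projective_plane Pts Lns I q"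
    and n_bounds: "2 \<le> int q - int n" "int q - int n \<le> int q"
    and UW: "finite U" "finite W" "U \<inter> W = {}"
    and cardU: "card U = q - n" and cardW: "card W = q"
    and emb: "graph_embedding Pts Lns I (U \<union> W) (complete_bipartite_edges U W) phi"
    and big: "q > n^2"
  shows "\<exists>l1\<in>Lns. \<exists>l2\<in>Lns. \<forall>x\<in>U \<union> W. I (phi x) l1 \<or> I (phi x) l2"
proof -
  interpret pplane Pts Lns I q using plane by unfold_locales
  have phiP: "\<And>x. x \<in> U \<union> W \<Longrightarrow> phi x \<in> Pts" using emb by (auto simp: graph_embedding_def)
  have phiinj: "inj_on phi (U \<union> W)" using emb by (auto simp: graph_embedding_def)
  have q2: "q \<ge> 2" and nq: "n + 2 \<le> q" using n_bounds by auto
  have K: "u = u' \<and> w = w'" if "u \<in> U" "u' \<in> U" "w \<in> W" "w' \<in> W" "l \<in> Lns"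
    "I (phi u) l" "I (phi w) l" "I (phi u') l" "I (phi w') l" for u u' w w' l
  proof -
    define el where "el = (\<lambda>e. THE l. l \<in> Lns \<and> (\<forall>x\<in>e. I (phi x) l))"
    have el: "el {u,w} = l" if "u \<in> U" "w \<in> W" "l \<in> Lns" "I (phi u) l" "I (phi w) l" for u w l
    proof -
      have ne: "phi u \<noteq> phi w" using phiinj that UW(3) by (metis UnI1 UnI2 disjoint_iff inj_on_contraD)
      show ?thesis unfolding el_def
      proof (rule the_equality)
        show "l \<in> Lns \<and> (\<forall>x\<in>{u, w}. I (phi x) l)" using that by auto
        fix l' assume "l' \<in> Lns \<and> (\<forall>x\<in>{u, w}. I (phi x) l')"
        then show "l' = l" using line_uniq[OF phiP phiP ne] that by auto
      qed
    qed
    have ie: "inj_on el (complete_bipartite_edges U W)" using emb unfolding el_def graph_embedding_def by auto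
    have "{u,w} = {u',w'}"
      apply (rule inj_onD[OF ie])
      using el that by (auto simp: complete_bipartite_edges_def)
    then show ?thesis using that UW(3) by (auto simp: doubleton_eq_iff)
  qed
  have pinj: "phi x = phi y \<Longrightarrow> x \<in> U \<union> W \<Longrightarrow> y \<in> U \<union> W \<Longrightarrow> x = y" for x y
    using phiinj by (meson inj_onD)
  have "card U \<ge> 2" using cardU nq by simp
  then obtain u0 u1 where u01: "u0 \<in> U" "u1 \<in> U" "u0 \<noteq> u1"
    by (metis One_nat_def Suc_1 card_le_Suc0_iff_eq not_less_eq_eq UW(1))
  have pu01: "phi u0 \<noteq> phi u1" using pinj u01 by blast
  define L where "L = ln (phi u0) (phi u1)"
  have L: "L \<in> Lns" "I (phi u0) L" "I (phi u1) L" using ln[OF phiP phiP pu01] u01 L_def by auto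
  have noW: "\<not> I (phi w) L" if "w \<in> W" for w
    using K[OF u01(1,2) that that L(1,2)] L u01 by auto
  have pne: "phi u \<noteq> phi w" if "u \<in> U" "w \<in> W" for u w
    using pinj that UW(3) by blast
  define S0 where "S0 = {l\<in>Lns. I (phi u0) l}"
  have cS0: "card S0 = q + 1" unfolding S0_def using pt_card phiP u01 by auto
  define A where "A = (\<lambda>w. ln (phi u0) (phi w)) ` W"
  have lnA: "ln (phi u0) (phi w) \<in> Lns" "I (phi u0) (ln (phi u0) (phi w))" "I (phi w) (ln (phi u0) (phi w))"
    if "w \<in> W" for w using ln[OF phiP phiP pne[OF u01(1) that]] u01 that by auto
  have injA: "inj_on (\<lambda>w. ln (phi u0) (phi w)) W"
  proof (rule inj_onI)
    fix w w' assume "w \<in> W" "w' \<in> W" "ln (phi u0) (phi w) = ln (phi u0) (phi w')"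
    then show "w = w'" using K[OF u01(1) u01(1) \<open>w \<in> W\<close> \<open>w' \<in> W\<close> lnA(1)[OF \<open>w \<in> W\<close>]] lnA by metis
  qed
  have cA: "card A = q" unfolding A_def using card_image[OF injA] cardW by simp
  have LA: "L \<notin> A" unfolding A_def using lnA noW by auto
  have finS0: "finite S0" unfolding S0_def using finL by simp
  have sub: "insert L A \<subseteq> S0" unfolding S0_def A_def using lnA L by auto
  have eqS0: "insert L A = S0"
    using card_subset_eq[OF finS0 sub] cA LA card_insert_disjoint[of A L] finite_subset[OF sub finS0] cS0
    by simp
  have UonL: "I (phi u) L" if "u \<in> U" for u
  proof (cases "u = u0")
    case True then show ?thesis using L by simp
  next
    case False
    then have ne: "phi u0 \<noteq> phi u" using pinj u01 that by blast
    note lu = ln[OF phiP phiP ne]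
    have "ln (phi u0) (phi u) \<in> S0" using lu u01 that unfolding S0_def by auto
    then have "ln (phi u0) (phi u) \<in> insert L A" using eqS0 by simp
    moreover have "ln (phi u0) (phi u) \<notin> A"
    proof
      assume "ln (phi u0) (phi u) \<in> A"
      then obtain w where w: "w \<in> W" "ln (phi u0) (phi u) = ln (phi u0) (phi w)" unfolding A_def by auto
      then show False using K[OF u01(1) that w(1) w(1) lnA(1)[OF w(1)]] lnA[OF w(1)] lu u01 that False
        by auto
    qed
    ultimately have "ln (phi u0) (phi u) = L" by simp
    then show ?thesis using lu u01 that by auto
  qed
  show ?thesis
  proof (cases "\<exists>M\<in>Lns. \<forall>w\<in>W. I (phi w) M")
    case True
    then obtain M where "M \<in> Lns" "\<forall>w\<in>W. I (phi w) M" by auto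
    then show ?thesis using L(1) UonL by blast
  next
    case nc: False
    define D where "D = {p\<in>Pts. I p L} - phi ` U"
    have finD: "finite D" unfolding D_def using finP by simp
    have "card (phi ` U) = q - n" using card_image[of phi U] phiinj cardU inj_on_subset by fastforce
    moreover have "phi ` U \<subseteq> {p\<in>Pts. I p L}" using UonL phiP by auto
    ultimately have cD: "card D = n + 1" unfolding D_def
      using card_Diff_subset[of "phi ` U" "{p\<in>Pts. I p L}"] line_card[OF L(1)] UW(1) nq by simp
    have pw: "phi w \<in> Pts" if "w \<in> W" for w using phiP that by auto
    have WW: "ln (phi w) (phi w2) \<in> Lns \<and> I (phi w) (ln (phi w) (phi w2)) \<and> I (phi w2) (ln (phi w) (phi w2))
       \<and> ln (phi w) (phi w2) \<noteq> L \<and> mt (ln (phi w) (phi w2)) L \<in> D"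
      if "w \<in> W" "w2 \<in> W" "w \<noteq> w2" for w w2
    proof -
      have ne: "phi w \<noteq> phi w2" using pinj that by blast
      note lw = ln[OF pw[OF that(1)] pw[OF that(2)] ne]
      have nL: "ln (phi w) (phi w2) \<noteq> L" using lw noW that by auto
      note m = mt[OF lw(1) L(1) nL]
      have "mt (ln (phi w) (phi w2)) L \<notin> phi ` U"
      proof
        assume "mt (ln (phi w) (phi w2)) L \<in> phi ` U"
        then obtain u where "u \<in> U" "phi u = mt (ln (phi w) (phi w2)) L" by auto
        then show False using K[OF \<open>u \<in> U\<close> \<open>u \<in> U\<close> that(1,2) lw(1)] lw m that by auto
      qed
      then show ?thesis using lw nL m unfolding D_def by auto
    qed
    have bound: "card {x\<in>W. I (phi x) (ln (phi w) (phi w2))} \<le> n" if "w \<in> W" "w2 \<in> W" "w \<noteq> w2" for w w2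
    proof -
      define M where "M = ln (phi w) (phi w2)"
      have M: "M \<in> Lns" "M \<noteq> L" "mt M L \<in> D" using WW[OF that] M_def by auto
      note P0 = mt[OF M(1) L(1) M(2)]
      obtain w' where w': "w' \<in> W" "\<not> I (phi w') M" using nc M(1) by auto
      define WM where "WM = {x\<in>W. I (phi x) M}"
      define f where "f x = mt (ln (phi w') (phi x)) L" for x
      have fx: "ln (phi w') (phi x) \<in> Lns \<and> I (phi w') (ln (phi w') (phi x)) \<and> I (phi x) (ln (phi w') (phi x))
         \<and> I (f x) (ln (phi w') (phi x)) \<and> f x \<in> D \<and> f x \<in> Pts \<and> I (f x) L" if "x \<in> WM" for x
      proof -
        have xW: "x \<in> W" using that WM_def by auto
        have "x \<noteq> w'" using that w' WM_def by auto
        note h = WW[OF w'(1) xW this[symmetric]]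
        from h have A1: "ln (phi w') (phi x) \<in> Lns" and A2: "ln (phi w') (phi x) \<noteq> L" by auto
        note m = mt[OF A1 L(1) A2]
        show ?thesis using h m by (simp add: f_def)
      qed
      have "inj_on f WM"
      proof (rule inj_onI)
        fix x y assume xy: "x \<in> WM" "y \<in> WM" "f x = f y"
        show "x = y"
        proof (rule ccontr)
          assume "x \<noteq> y"
          have xW: "x \<in> W" and yW: "y \<in> W" and xM: "I (phi x) M" and yM: "I (phi y) M" using xy WM_def by auto
          from fx[OF xy(1)] have a1: "ln (phi w') (phi x) \<in> Lns" and a2: "I (phi w') (ln (phi w') (phi x))"
            and a3: "I (phi x) (ln (phi w') (phi x))" and a4: "I (f x) (ln (phi w') (phi x))"
            and a5: "f x \<in> Pts" and a6: "I (f x) L" by auto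
          from fx[OF xy(2)] have b1: "ln (phi w') (phi y) \<in> Lns" and b2: "I (phi w') (ln (phi w') (phi y))"
            and b3: "I (phi y) (ln (phi w') (phi y))" and b4: "I (f x) (ln (phi w') (phi y))"
            using xy(3) by auto
          have ne1: "phi w' \<noteq> f x" using a6 noW[OF w'(1)] by auto
          have e1: "ln (phi w') (phi x) = ln (phi w') (phi y)"
            by (rule line_uniq[OF pw[OF w'(1)] a5 ne1 a1 b1 a2 a4 b2 b4])
          have ne2: "phi x \<noteq> phi y" using pinj \<open>x \<noteq> y\<close> xW yW by blast
          have "ln (phi w') (phi x) = M"
            by (rule line_uniq[OF pw[OF xW] pw[OF yW] ne2 a1 M(1) a3 _ xM yM]) (use b3 e1 in simp)
          then show False using fx[OF xy(1)] w' by simp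
        qed
      qed
      moreover have "f ` WM \<subseteq> D - {mt M L}"
      proof
        fix p assume "p \<in> f ` WM"
        then obtain x where x: "x \<in> WM" "p = f x" by auto
        have "p \<noteq> mt M L"
        proof
          assume pe: "p = mt M L"
          have xW: "x \<in> W" and xM: "I (phi x) M" using x WM_def by auto
          from fx[OF x(1)] have a1: "ln (phi w') (phi x) \<in> Lns"
            and a3: "I (phi x) (ln (phi w') (phi x))" and a4: "I (f x) (ln (phi w') (phi x))"
            and a5: "f x \<in> Pts" and a6: "I (f x) L" by auto
          have ne: "phi x \<noteq> f x" using a6 noW[OF xW] by auto
          have "ln (phi w') (phi x) = M"
            by (rule line_uniq[OF pw[OF xW] a5 ne a1 M(1) a3 a4 xM]) (use P0 pe x(2) in simp)
          then show False using fx[OF x(1)] w' by simp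
        qed
        then show "p \<in> D - {mt M L}" using fx[OF x(1)] x by auto
      qed
      ultimately have "card WM \<le> card (D - {mt M L})"
        using card_inj_on_le finD by blast
      also have "\<dots> = n" using cD M(3) finD by simp
      finally show ?thesis unfolding WM_def M_def .
    qed
    obtain w where wW: "w \<in> W" using cardW q2 by fastforce
    define B where "B P = {x\<in>W-{w}. I (phi x) (ln (phi w) P)}" for P
    have cover: "W - {w} \<subseteq> (\<Union>P\<in>D. B P)"
    proof
      fix x assume x: "x \<in> W - {w}"
      then have xW: "x \<in> W" and ne: "w \<noteq> x" by auto
      note h = WW[OF wW xW ne]
      define M where "M = ln (phi w) (phi x)"
      have M: "M \<in> Lns" "I (phi w) M" "I (phi x) M" "M \<noteq> L" "mt M L \<in> D" using h M_def by auto
      note m = mt[OF M(1) L(1) M(4)]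
      have ne': "phi w \<noteq> mt M L" using m(3) noW[OF wW] by auto
      have "ln (phi w) (mt M L) = M" by (rule ln_eq[OF pw[OF wW] m(1) ne' M(1) M(2) m(2)])
      then have "x \<in> B (mt M L)" using x M(3) B_def by simp
      then show "x \<in> (\<Union>P\<in>D. B P)" using M(5) by blast
    qed
    have Bb: "card (B P) \<le> n - 1" if P: "P \<in> D" for P
    proof (cases "B P = {}")
      case True then show ?thesis by simp
    next
      case False
      then obtain x where x: "x \<in> B P" by auto
      then have xW: "x \<in> W" and ne: "w \<noteq> x" and xl: "I (phi x) (ln (phi w) P)" using B_def by auto
      have PP: "P \<in> Pts" "I P L" using P D_def by auto
      have ne': "phi w \<noteq> P" using PP noW[OF wW] by auto
      note lp = ln[OF pw[OF wW] PP(1) ne']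
      have nep: "phi w \<noteq> phi x" using pinj ne wW xW by blast
      have eq: "ln (phi w) (phi x) = ln (phi w) P" by (rule ln_eq[OF pw[OF wW] pw[OF xW] nep lp(1) lp(2) xl])
      have "B P \<subseteq> {y\<in>W. I (phi y) (ln (phi w) (phi x))} - {w}" using eq B_def by auto
      then have "card (B P) \<le> card ({y\<in>W. I (phi y) (ln (phi w) (phi x))} - {w})"
        using UW(2) by (intro card_mono) auto
      also have "\<dots> = card {y\<in>W. I (phi y) (ln (phi w) (phi x))} - 1"
        using wW eq lp(2) by (intro card_Diff_singleton) auto
      also have "\<dots> \<le> n - 1" using bound[OF wW xW ne] by simp
      finally show ?thesis .
    qed
    have "q - 1 = card (W - {w})" using cardW wW UW(2) by simp
    also have "\<dots> \<le> card (\<Union>P\<in>D. B P)"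
      using cover finD UW(2) by (intro card_mono) (auto simp: B_def)
    also have "\<dots> \<le> (\<Sum>P\<in>D. card (B P))" using card_UN_le[OF finD] by blast
    also have "\<dots> \<le> card D * (n - 1)" using sum_bounded_above[of D "\<lambda>P. card (B P)" "n - 1"] Bb by simp
    finally have ineq: "q - 1 \<le> (n + 1) * (n - 1)" using cD by simp
    have False
    proof (cases n)
      case 0 then show False using ineq q2 by simp
    next
      case (Suc m)
      then show False using ineq big by (simp add: power2_eq_square algebra_simps)
    qed
    then show ?thesis ..
  qed
qed
end
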